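(* Let $S_j$ be local potentials satisfying (A)–(E), and let $(p_1,q_1),\dots,(p_d,q_d)\in\mathbb{Z}^d\times\mathbb{Z}$ with $p_1,\dots,p_d$ linearly independent. If $x\in\mathbb{X}_{p,q}$ is a global minimizer, then $x$ minimizes $W_{p,q}$ on $\mathbb{X}_{p,q}$.
   Context: Notation: $\|i\|=\sum_{k=1}^d|i_k|$, $B_j^r=\{k:\|k-j\|\le r\}$, $(\tau_{k,l}x)_i=x_{i+k}+l$. Local potentials $S_j:\mathbb{R}^{\mathbb{Z}^d}\to\mathbb{R}$, $j\in\mathbb{Z}^d$, satisfy: (A) there is $r\in(0,\infty)$ and $C^2$ functions $s_j:\mathbb{R}^{B_j^r}\to\mathbb{R}$ with $S_j(x)=s_j(x|_{B_j^r})$; (B) $S_j(\tau_{k,l}x)=S_{j+k}(x)$; (C) each $S_j$ is bounded below and $S_j(x)\to\infty$ as $|x_k-x_j|\to\infty$ whenever $\|k-j\|=1$; (D) $\partial_{i,k}S_j\le0$ for $i\ne k$, and $\partial_{i,k}S_i<0$ when $\|i-k\|=1$; (E) $|\partial_{i,k}S_j|\le C$ uniformly. With $p$ the matrix with columns $p_j$: $B_p=p([0,1)^d)\cap\mathbb{Z}^d$, $\mathbb{X}_{p,q}=\{x:\tau_{p_j,q_j}x=x\ \forall j\}$, $W_{p,q}(x)=\sum_{j\in B_p}S_j(x)$. For finite $B\subset\mathbb{Z}^d$: $W_B(x)=\sum_{j\in B}S_j(x)$ and $\mathring{B}^{(r)}=\{i\in B:B_i^r\subset B\}$. A configuration $x$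 is a global minimizer if $W_B(x+y)\ge W_B(x)$ for every finite $B$ and every $y$ with support in $\mathring{B}^{(r)}$. *)

theory Defs
  imports "HOL-Analysis.Analysis"
begin

text \<open>The space of configurations carries the product topology (Function_Topology).\<close>

type_synonym 'd site = "int ^ 'd"
type_synonym 'd config = "'d site \<Rightarrow> real"

definition norm1 :: "'d::finite site \<Rightarrow> int" where
  "norm1 i = (\<Sum>k\<in>UNIV. \<bar>i $ k\<bar>)"

definition ball1 :: "'d::finite site \<Rightarrow> real \<Rightarrow> 'd site set" where
  "ball1 j r = {k. real_of_int (norm1 (k - j)) \<le> r}"

definition tau :: "'d::finite site \<Rightarrow> int \<Rightarrow> 'd config \<Rightarrow> 'd config" where
  "tau k l x = (\<lambda>i. x (i + k) + real_of_int l)"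

definition partial_exists :: "'d::finite site \<Rightarrow> ('d config \<Rightarrow> real) \<Rightarrow> 'd config \<Rightarrow> bool" where
  "partial_exists i F x \<longleftrightarrow> (\<lambda>t. F (x(i := x i + t))) differentiable (at 0)"

definition partial :: "'d::finite site \<Rightarrow> ('d config \<Rightarrow> real) \<Rightarrow> 'd config \<Rightarrow> real" where
  "partial i F x = deriv (\<lambda>t. F (x(i := x i + t))) 0"

definition partial2 :: "'d::finite site \<Rightarrow> 'd site \<Rightarrow> ('d config \<Rightarrow> real) \<Rightarrow> 'd config \<Rightarrow> real" where
  "partial2 i k F = partial i (partial k F)"

text \<open>For a function depending on finitely many coordinates (as in (A)) this is
  exactly \<open>C\<^sup>2\<close>-ness of the induced function on \<open>\<real>^{B}\<close>.\<close>
definition C2 :: "('d::finite config \<Rightarrow> real) \<Rightarrow> bool" where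
  "C2 F \<longleftrightarrow> continuous_on UNIV F
     \<and> (\<forall>i x. partial_exists i F x) \<and> (\<forall>i. continuous_on UNIV (partial i F))
     \<and> (\<forall>i k x. partial_exists i (partial k F) x)
     \<and> (\<forall>i k. continuous_on UNIV (partial2 i k F))"

definition condA :: "real \<Rightarrow> ('d::finite site \<Rightarrow> 'd config \<Rightarrow> real) \<Rightarrow> bool" where
  "condA r S \<longleftrightarrow> 0 < r \<and> (\<forall>j. (\<forall>x y. (\<forall>k\<in>ball1 j r. x k = y k) \<longrightarrow> S j x = S j y) \<and> C2 (S j))"

definition condB :: "('d::finite site \<Rightarrow> 'd config \<Rightarrow> real) \<Rightarrow> bool" where
  "condB S \<longleftrightarrow> (\<forall>j k l x. S j (tau k l x) = S (j + k) x)"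

definition condC :: "('d::finite site \<Rightarrow> 'd config \<Rightarrow> real) \<Rightarrow> bool" where
  "condC S \<longleftrightarrow> (\<forall>j. (\<exists>c. \<forall>x. c \<le> S j x)) \<and>
     (\<forall>j k. norm1 (k - j) = 1 \<longrightarrow>
        (\<forall>M. \<exists>R. \<forall>x. R \<le> \<bar>x k - x j\<bar> \<longrightarrow> M \<le> S j x))"

definition condD :: "('d::finite site \<Rightarrow> 'd config \<Rightarrow> real) \<Rightarrow> bool" where
  "condD S \<longleftrightarrow> (\<forall>i k j x. i \<noteq> k \<longrightarrow> partial2 i k (S j) x \<le> 0) \<and>
     (\<forall>i k x. norm1 (i - k) = 1 \<longrightarrow> partial2 i k (S i) x < 0)"

definition condE :: "('d::finite site \<Rightarrow> 'd config \<Rightarrow> real) \<Rightarrow> bool" where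
  "condE S \<longleftrightarrow> (\<exists>C. \<forall>i k j x. \<bar>partial2 i k (S j) x\<bar> \<le> C)"

definition realv :: "'d::finite site \<Rightarrow> real ^ 'd" where
  "realv k = (\<chi> i. real_of_int (k $ i))"

definition Bp :: "('d::finite \<Rightarrow> 'd site) \<Rightarrow> 'd site set" where
  "Bp p = {k. \<exists>t::real ^ 'd. (\<forall>j. 0 \<le> t $ j \<and> t $ j < 1) \<and>
                realv k = (\<Sum>j\<in>UNIV. t $ j *\<^sub>R realv (p j))}"

definition Xpq :: "('d::finite \<Rightarrow> 'd site) \<Rightarrow> ('d \<Rightarrow> int) \<Rightarrow> 'd config set" where
  "Xpq p q = {x. \<forall>j. tau (p j) (q j) x = x}"

definition Wpq :: "('d::finite site \<Rightarrow> 'd config \<Rightarrow> real) \<Rightarrow> ('d \<Rightarrow> 'd site) \<Rightarrow> 'd config \<Rightarrow> real" where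
  "Wpq S p x = (\<Sum>j\<in>Bp p. S j x)"

definition WB :: "('d::finite site \<Rightarrow> 'd config \<Rightarrow> real) \<Rightarrow> 'd site set \<Rightarrow> 'd config \<Rightarrow> real" where
  "WB S B x = (\<Sum>j\<in>B. S j x)"

definition interior_r :: "real \<Rightarrow> 'd::finite site set \<Rightarrow> 'd site set" where
  "interior_r r B = {i\<in>B. ball1 i r \<subseteq> B}"

definition global_minimizer :: "real \<Rightarrow> ('d::finite site \<Rightarrow> 'd config \<Rightarrow> real) \<Rightarrow> 'd config \<Rightarrow> bool" where
  "global_minimizer r S x \<longleftrightarrow>
     (\<forall>B y. finite B \<longrightarrow> {i. y i \<noteq> 0} \<subseteq> interior_r r B \<longrightarrow>
        WB S B x \<le> WB S B (\<lambda>i. x i + y i))"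

end

theory Submission
  imports Defs
begin



definition lat :: "('d::finite \<Rightarrow> 'd site) \<Rightarrow> ('d \<Rightarrow> int) \<Rightarrow> 'd site" where
  "lat p n = (\<chi> i. \<Sum>m\<in>UNIV. n m * p m $ i)"

lemma realv_add: "realv (a + b) = realv a + realv b"
  by (simp add: realv_def vec_eq_iff)
lemma realv_diff: "realv (a - b) = realv a - realv b"
  by (simp add: realv_def vec_eq_iff)
lemma realv_eq: "realv a = realv b \<longleftrightarrow> a = b"
  by (simp add: realv_def vec_eq_iff)

lemma realv_lat: "realv (lat p n) = (\<Sum>m\<in>UNIV. of_int (n m) *\<^sub>R realv (p m))"
  by (simp add: realv_def lat_def vec_eq_iff sum_component)

lemma lat_add: "lat p (\<lambda>m. a m + b m) = lat p a + lat p b"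
  by (simp add: lat_def vec_eq_iff distrib_right sum.distrib)
lemma lat_diff: "lat p (\<lambda>m. a m - b m) = lat p a - lat p b"
  by (simp add: lat_def vec_eq_iff left_diff_distrib sum_subtractf)

context
  fixes p :: "'d::finite \<Rightarrow> 'd site"
  assumes injp: "inj (\<lambda>j. realv (p j))" and indp: "independent (range (\<lambda>j. realv (p j)))"
begin

lemma coef_zero:
  assumes "(\<Sum>m\<in>UNIV. a m *\<^sub>R realv (p m)) = 0" shows "a m = 0"
proof -
  let ?P = "\<lambda>j. realv (p j)"
  define u where "u v = a (inv ?P v)" for v
  have "(\<Sum>v\<in>range ?P. u v *\<^sub>R v) = (\<Sum>m\<in>UNIV. u (?P m) *\<^sub>R ?P m)"
    by (subst sum.reindex[OF injp]) simp
  also have "\<dots> = 0" using assms by (simp add: u_def inv_f_f[OF injp])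
  finally have "u (?P m) = 0"
    by (intro real_vector.independentD[OF indp _ order_refl]) auto
  thus ?thesis by (simp add: u_def inv_f_f[OF injp])
qed

lemma coef_unique:
  assumes "(\<Sum>m\<in>UNIV. a m *\<^sub>R realv (p m)) = (\<Sum>m\<in>UNIV. b m *\<^sub>R realv (p m))"
  shows "a m = b m"
proof -
  have "(\<Sum>m\<in>UNIV. (a m - b m) *\<^sub>R realv (p m)) = 0"
    using assms by (simp add: scaleR_diff_left sum_subtractf)
  from coef_zero[OF this] show ?thesis by simp
qed

lemma lat_inj: assumes "lat p a = lat p b" shows "a = b"
proof
  fix m
  have "(\<Sum>m\<in>UNIV. of_int (a m) *\<^sub>R realv (p m)) = (\<Sum>m\<in>UNIV. of_int (b m) *\<^sub>R realv (p m))"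
    using assms by (simp flip: realv_lat)
  from coef_unique[OF this, of m] show "a m = b m" by simp
qed

lemma spanning: "\<exists>t. v = (\<Sum>m\<in>UNIV. t m *\<^sub>R realv (p m))"
proof -
  let ?P = "\<lambda>j. realv (p j)"
  have "card (range ?P) = CARD('d)" using card_image[OF injp] by simp
  hence "UNIV \<subseteq> span (range ?P)"
    by (intro card_ge_dim_independent[OF _ indp]) auto
  hence "v \<in> span (range ?P)" by auto
  then obtain u where "v = (\<Sum>w\<in>range ?P. u w *\<^sub>R w)"
    using real_vector.span_finite[of "range ?P"] by auto
  also have "\<dots> = (\<Sum>m\<in>UNIV. u (?P m) *\<^sub>R ?P m)"
    by (subst sum.reindex[OF injp]) simp
  finally show ?thesis by (rule exI[of _ "\<lambda>m. u (realv (p m))"])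
qed

lemma decomp_exists: "\<exists>j n. j \<in> Bp p \<and> k = j + lat p n"
proof -
  obtain t where t: "realv k = (\<Sum>m\<in>UNIV. t m *\<^sub>R realv (p m))" using spanning by blast
  define n where "n m = \<lfloor>t m\<rfloor>" for m
  define j where "j = k - lat p n"
  have "realv j = (\<Sum>m\<in>UNIV. (t m - of_int (n m)) *\<^sub>R realv (p m))"
    by (simp add: j_def realv_diff realv_lat t scaleR_diff_left sum_subtractf)
  moreover have h: "\<And>m. 0 \<le> t m - of_int (n m)" "\<And>m. t m - of_int(n m) < 1"
    unfolding n_def by (metis frac_def frac_ge_0) (metis frac_def frac_lt_1)
  ultimately have "j \<in> Bp p"
    unfolding Bp_def
    by (intro CollectI exI[of _ "\<chi> m. t m - of_int (n m)"]) (simp add: h)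
  thus ?thesis unfolding j_def by force
qed

lemma decomp_unique:
  assumes "j1 \<in> Bp p" "j2 \<in> Bp p" "j1 + lat p n1 = j2 + lat p n2"
  shows "n1 = n2"
proof
  fix m
  obtain t1 where t1: "\<forall>j. 0 \<le> t1 $ j \<and> t1 $ j < 1" "realv j1 = (\<Sum>j\<in>UNIV. t1 $ j *\<^sub>R realv (p j))"
    using assms(1) unfolding Bp_def by blast
  obtain t2 where t2: "\<forall>j. 0 \<le> t2 $ j \<and> t2 $ j < 1" "realv j2 = (\<Sum>j\<in>UNIV. t2 $ j *\<^sub>R realv (p j))"
    using assms(2) unfolding Bp_def by blast
  have "realv (j1 + lat p n1) = realv (j2 + lat p n2)" using assms(3) by simp
  hence "(\<Sum>m\<in>UNIV. (t1 $ m + of_int (n1 m)) *\<^sub>R realv (p m)) =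
         (\<Sum>m\<in>UNIV. (t2 $ m + of_int (n2 m)) *\<^sub>R realv (p m))"
    by (simp add: realv_add realv_lat t1 t2 scaleR_add_left sum.distrib)
  from coef_unique[OF this, of m]
  have e: "of_int (n1 m - n2 m) = t2 $ m - t1 $ m" by simp
  have "-1 < real_of_int (n1 m - n2 m)" "real_of_int (n1 m - n2 m) < 1"
    using e t1(1)[rule_format, of m] t2(1)[rule_format, of m] by linarith+
  hence "-1 < n1 m - n2 m" "n1 m - n2 m < 1" by simp_all
  thus "n1 m = n2 m" by simp
qed

end



lemma lat_sum: "lat p n = (\<Sum>m\<in>UNIV. n m *s p m)"
  by (simp add: lat_def vec_eq_iff sum_component)

lemma shift_nat:
  fixes f :: "'d::finite site \<Rightarrow> real" and c :: real
  assumes "\<And>i. f (i + a) + c = f i"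
  shows "f (i + of_nat k *s a) + of_nat k * c = f i"
proof (induction k arbitrary: i)
  case 0 then show ?case by (simp add: vec_eq_iff)
next
  case (Suc k)
  have "f (i + of_nat (Suc k) *s a) = f ((i + a) + of_nat k *s a)"
    by (simp add: vec_eq_iff algebra_simps)
  also have "\<dots> = f (i + a) - of_nat k * c" using Suc[of "i+a"] by simp
  finally show ?case using assms[of i] by (simp add: algebra_simps)
qed

lemma shift_int:
  fixes f :: "'d::finite site \<Rightarrow> real" and c :: real
  assumes "\<And>i. f (i + a) + c = f i"
  shows "f (i + k *s a) + of_int k * c = f i"
proof (cases "k \<ge> 0")
  case True
  then obtain n where "k = of_nat n" by (metis nonneg_int_cases)
  moreover have "f (i + of_nat n *s a) + of_nat n * c = f i" by (rule shift_nat) (rule assms)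
  ultimately show ?thesis by simp
next
  case False
  then obtain n where k: "k = - of_nat n" using False by (intro that[of "nat (-k)"]) simp
  have h: "f ((i + k *s a) + of_nat n *s a) + of_nat n * c = f (i + k *s a)"
    by (rule shift_nat) (rule assms)
  have e: "(i + k *s a) + of_nat n *s a = i" by (simp add: k vec_eq_iff)
  have "f i + of_nat n * c = f (i + k *s a)" using h by (simp only: e)
  thus ?thesis by (simp add: k)
qed

lemma Xpq_iff: "u \<in> Xpq p q \<longleftrightarrow> (\<forall>m i. u (i + p m) + of_int (q m) = u i)"
  by (simp add: Xpq_def tau_def fun_eq_iff)

lemma shift_sum:
  assumes "u \<in> Xpq p q" "finite A"
  shows "u (i + (\<Sum>m\<in>A. n m *s p m)) + of_int (\<Sum>m\<in>A. n m * q m) = u i"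
  using assms(2)
proof (induction A arbitrary: i rule: finite_induct)
  case empty then show ?case by simp
next
  case (insert m A)
  have per: "\<And>i. u (i + p m) + of_int (q m) = u i" using assms(1) Xpq_iff by blast
  have "u (i + (\<Sum>m\<in>insert m A. n m *s p m)) + of_int (\<Sum>m\<in>insert m A. n m * q m)
      = (u ((i + n m *s p m) + (\<Sum>m\<in>A. n m *s p m)) + of_int (\<Sum>m\<in>A. n m * q m)) + of_int (n m) * of_int (q m)"
    using insert by (simp add: algebra_simps)
  also have "\<dots> = u (i + n m *s p m) + of_int (n m) * of_int (q m)" using insert.IH by simp
  also have "\<dots> = u i" by (rule shift_int[of u "p m" "real_of_int (q m)"]) (rule per)
  finally show ?case .
qed

definition lq :: "('d::finite \<Rightarrow> int) \<Rightarrow> ('d \<Rightarrow> int) \<Rightarrow> int" where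
  "lq q n = (\<Sum>m\<in>UNIV. n m * q m)"

lemma per_lat: "u \<in> Xpq p q \<Longrightarrow> u (i + lat p n) + of_int (lq q n) = u i"
  using shift_sum[of u p q UNIV i n] by (simp add: lat_sum lq_def)

lemma tau_lat: "u \<in> Xpq p q \<Longrightarrow> tau (lat p n) (lq q n) u = u"
  using per_lat[of u p q] by (simp add: tau_def fun_eq_iff)

lemma S_per: "condB S \<Longrightarrow> u \<in> Xpq p q \<Longrightarrow> S (j + lat p n) u = S j u"
  unfolding condB_def by (metis tau_lat)

definition mix :: "'d::finite config \<Rightarrow> 'd config \<Rightarrow> 'd site set \<Rightarrow> 'd config" where
  "mix x z A = (\<lambda>i. if i \<in> A then z i else x i)"

lemma tau_mix: "x \<in> Xpq p q \<Longrightarrow> z \<in> Xpq p q \<Longrightarrow>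
   tau (lat p n) (lq q n) (mix x z A) = mix x z {i. i + lat p n \<in> A}"
  using per_lat[of x p q] per_lat[of z p q] by (simp add: tau_def mix_def fun_eq_iff)

definition ibox :: "int \<Rightarrow> 'd::finite site set" where
  "ibox R = {k. \<forall>m. \<bar>k $ m\<bar> \<le> R}"

lemma finite_ibox: "finite (ibox R :: 'd::finite site set)"
proof -
  have "ibox R \<subseteq> vec_lambda ` (PiE UNIV (\<lambda>_::'d. {-R..R}))"
  proof
    fix k :: "'d site" assume "k \<in> ibox R"
    have "\<forall>m. -R \<le> k$m \<and> k$m \<le> R"
    proof
      fix m have "\<bar>k$m\<bar> \<le> R" using \<open>k \<in> ibox R\<close> by (auto simp: ibox_def)
      thus "-R \<le> k$m \<and> k$m \<le> R" by linarith
    qed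
    hence "(\<lambda>m. k $ m) \<in> PiE UNIV (\<lambda>_. {-R..R})" by auto
    thus "k \<in> vec_lambda ` (PiE UNIV (\<lambda>_::'d. {-R..R}))" by (intro image_eqI[of _ _ "\<lambda>m. k $ m"]) auto
  qed
  moreover have "finite (PiE UNIV (\<lambda>_::'d. {-R..R}))" by (intro finite_PiE) auto
  ultimately show ?thesis by (meson finite_imageI finite_subset)
qed

lemma comp_le_norm1: "\<bar>k $ m\<bar> \<le> norm1 k"
  unfolding norm1_def by (rule member_le_sum) auto

lemma norm1_triangle: "norm1 (a + b) \<le> norm1 a + norm1 b"
  unfolding norm1_def by (simp add: sum.distrib[symmetric] sum_mono abs_triangle_ineq)

lemma finite_ball1: "finite (ball1 j r)"
proof -
  have "ball1 j r \<subseteq> (\<lambda>v. v + j) ` ibox \<lceil>r\<rceil>"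
  proof
    fix k assume "k \<in> ball1 j r"
    hence "real_of_int (norm1 (k - j)) \<le> r" by (simp add: ball1_def)
    hence "norm1 (k - j) \<le> \<lceil>r\<rceil>" by linarith
    hence "k - j \<in> ibox \<lceil>r\<rceil>" using comp_le_norm1[of "k - j"] by (auto simp: ibox_def intro: order_trans)
    thus "k \<in> (\<lambda>v. v + j) ` ibox \<lceil>r\<rceil>" by (intro image_eqI[of _ _ "k - j"]) auto
  qed
  thus ?thesis by (meson finite_ibox finite_imageI finite_subset)
qed

definition Rb :: "('d::finite \<Rightarrow> 'd site) \<Rightarrow> int" where
  "Rb p = (\<Sum>m\<in>UNIV. \<Sum>i\<in>UNIV. \<bar>p m $ i\<bar>)"

lemma Bp_ibox: fixes p :: "'d::finite \<Rightarrow> 'd site" shows "Bp p \<subseteq> ibox (Rb p)"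
proof
  fix k assume "k \<in> Bp p"
  then obtain t :: "real^'d" where t: "\<forall>j. 0 \<le> t $ j \<and> t $ j < 1"
    "realv k = (\<Sum>j\<in>UNIV. t $ j *\<^sub>R realv (p j))" unfolding Bp_def by blast
  show "k \<in> ibox (Rb p)" unfolding ibox_def
  proof (intro CollectI allI)
    fix i
    have "real_of_int (k $ i) = (\<Sum>j\<in>UNIV. t $ j * real_of_int (p j $ i))"
      using arg_cong[OF t(2), of "\<lambda>v. v $ i"] by (simp add: realv_def sum_component)
    hence "\<bar>real_of_int (k $ i)\<bar> \<le> (\<Sum>j\<in>UNIV. \<bar>t $ j * real_of_int (p j $ i)\<bar>)"
      by (simp add: sum_abs)
    also have "\<dots> \<le> (\<Sum>j\<in>UNIV. real_of_int \<bar>p j $ i\<bar>)"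
    proof (rule sum_mono)
      fix j
      have "\<bar>t $ j\<bar> \<le> 1" using t(1) by (simp add: abs_le_iff) (meson less_imp_le order_trans t(1) linorder_not_le neg_le_0_iff_le zero_le_one)
      thus "\<bar>t $ j * real_of_int (p j $ i)\<bar> \<le> real_of_int \<bar>p j $ i\<bar>"
        by (simp add: abs_mult mult_left_le_one_le)
    qed
    also have "\<dots> \<le> real_of_int (Rb p)"
    proof -
      have "(\<Sum>j\<in>UNIV. \<bar>p j $ i\<bar>) \<le> (\<Sum>j\<in>UNIV. \<Sum>i\<in>UNIV. \<bar>p j $ i\<bar>)"
        by (intro sum_mono member_le_sum) auto
      hence "real_of_int (\<Sum>j\<in>UNIV. \<bar>p j $ i\<bar>) \<le> real_of_int (Rb p)" unfolding Rb_def by linarith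
      thus ?thesis by simp
    qed
    finally show "\<bar>k $ i\<bar> \<le> Rb p" by simp
  qed
qed

lemma finite_Bp: "finite (Bp p)"
  using Bp_ibox finite_ibox finite_subset by blast




definition grid :: "nat \<Rightarrow> ('d::finite \<Rightarrow> int) set" where
  "grid N = PiE UNIV (\<lambda>_. {0..<int N})"

lemma finite_grid: "finite (grid N)"
  unfolding grid_def by (intro finite_PiE) auto

lemma card_grid: "card (grid N :: ('d::finite \<Rightarrow> int) set) = N ^ CARD('d)"
  unfolding grid_def by (subst card_PiE) auto

lemma card_edge:
  assumes "0 \<le> R"
  shows "card {n \<in> grid N. \<exists>m::'d::finite. n m < R \<or> int N - R \<le> n m}
          \<le> CARD('d) * (2 * nat R * N ^ (CARD('d) - 1))"
proof -
  define F where "F m = PiE UNIV (\<lambda>i::'d. if i = m then {0..<R} \<union> {int N - R..<int N} else {0..<int N})" for m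
  have sub: "{n \<in> grid N. \<exists>m::'d. n m < R \<or> int N - R \<le> n m} \<subseteq> (\<Union>m. F m)"
  proof
    fix n assume "n \<in> {n \<in> grid N. \<exists>m::'d. n m < R \<or> int N - R \<le> n m}"
    then obtain m where n: "n \<in> grid N" "n m < R \<or> int N - R \<le> n m" by blast
    have "n \<in> F m" using n unfolding F_def grid_def by (auto simp: PiE_iff)
    thus "n \<in> (\<Union>m. F m)" by blast
  qed
  have finF: "finite (F m)" for m unfolding F_def by (intro finite_PiE) auto
  have cF: "card (F m) \<le> 2 * nat R * N ^ (CARD('d) - 1)" for m
  proof -
    have "card (F m) = (\<Prod>i\<in>UNIV. card (if i = m then {0..<R} \<union> {int N - R..<int N} else {0..<int N}))"
      unfolding F_def by (rule card_PiE) simp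
    also have "\<dots> = card ({0..<R} \<union> {int N - R..<int N}) *
        (\<Prod>i\<in>UNIV-{m}. card (if i = m then {0..<R} \<union> {int N - R..<int N} else {0..<int N}))"
      by (subst prod.remove[of UNIV m]) auto
    also have "(\<Prod>i\<in>UNIV-{m}. card (if i = m then {0..<R} \<union> {int N - R..<int N} else {0..<int N}))
               = (\<Prod>i\<in>UNIV-{m}. N)"
      by (intro prod.cong) auto
    also have "\<dots> = N ^ (CARD('d) - 1)" by (simp add: card_Diff_singleton)
    also have "card ({0..<R} \<union> {int N - R..<int N}) \<le> card {0..<R} + card {int N - R..<int N}"
      by (rule card_Un_le)
    also have "\<dots> = 2 * nat R" using assms by simp
    finally show ?thesis by simp
  qed
  have "card {n \<in> grid N. \<exists>m::'d. n m < R \<or> int N - R \<le> n m} \<le> card (\<Union>m. F m)"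
    by (rule card_mono[OF _ sub]) (simp add: finF)
  also have "\<dots> \<le> (\<Sum>m\<in>UNIV. card (F m))" by (rule card_UN_le) simp
  also have "\<dots> \<le> (\<Sum>m\<in>(UNIV::'d set). 2 * nat R * N ^ (CARD('d) - 1))" by (intro sum_mono cF)
  also have "\<dots> = CARD('d) * (2 * nat R * N ^ (CARD('d) - 1))" by simp
  finally show ?thesis .
qed




context
  fixes p :: "'d::finite \<Rightarrow> 'd site"
  assumes injp: "inj (\<lambda>j. realv (p j))" and indp: "independent (range (\<lambda>j. realv (p j)))"
begin

lemma phi_inj: "inj_on (\<lambda>(j,n). j + lat p n) (Bp p \<times> UNIV)"
proof (rule inj_onI, clarify)
  fix j1 n1 j2 n2 assume h: "j1 \<in> Bp p" "j2 \<in> Bp p" "j1 + lat p n1 = j2 + lat p n2"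
  have "n1 = n2" by (rule decomp_unique[OF injp indp h])
  with h(3) show "j1 = j2 \<and> n1 = n2" by simp
qed

lemma sum_boxN:
  assumes "condB S" "u \<in> Xpq p q"
  shows "WB S ((\<lambda>(j,n). j + lat p n) ` (Bp p \<times> grid N)) u = real (N ^ CARD('d)) * Wpq S p u"
proof -
  have inj: "inj_on (\<lambda>(j,n). j + lat p n) (Bp p \<times> grid N)"
    using phi_inj by (rule inj_on_subset) auto
  have "WB S ((\<lambda>(j,n). j + lat p n) ` (Bp p \<times> grid N)) u
      = (\<Sum>(j,n)\<in>Bp p \<times> grid N. S (j + lat p n) u)"
    unfolding WB_def by (subst sum.reindex[OF inj]) (simp add: case_prod_unfold)
  also have "\<dots> = (\<Sum>(j,n)\<in>Bp p \<times> (grid N :: ('d \<Rightarrow> int) set). S j u)"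
    using S_per[OF assms] by (simp add: case_prod_unfold)
  also have "\<dots> = (\<Sum>j\<in>Bp p. \<Sum>n\<in>(grid N :: ('d \<Rightarrow> int) set). S j u)"
    by (rule sum.cartesian_product[symmetric])
  also have "\<dots> = (\<Sum>j\<in>Bp p. real (N ^ CARD('d)) * S j u)"
    by (simp add: card_grid)
  also have "\<dots> = real (N ^ CARD('d)) * Wpq S p u"
    by (simp add: Wpq_def sum_distrib_left)
  finally show ?thesis .
qed

end




theorem mainTheorem6:
  fixes r :: real
    and S :: "'d::finite site \<Rightarrow> 'd config \<Rightarrow> real"
    and p :: "'d \<Rightarrow> 'd site"
    and q :: "'d \<Rightarrow> int"
    and x :: "'d config"
  assumes "condA r S" and "condB S" and "condC S" and "condD S" and "condE S"
    and "inj (\<lambda>j. realv (p j))" and "independent (range (\<lambda>j. realv (p j)))"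
    and "x \<in> Xpq p q"
    and "global_minimizer r S x"
  shows "\<forall>z\<in>Xpq p q. Wpq S p x \<le> Wpq S p z"
proof (rule ballI, rule ccontr)
  note injp = assms(6) and indp = assms(7) and xX = assms(8)
  fix z assume zX: "z \<in> Xpq p q" and nle: "\<not> Wpq S p x \<le> Wpq S p z"
  define \<Delta> where "\<Delta> = Wpq S p x - Wpq S p z"
  have \<Delta>pos: "0 < \<Delta>" using nle by (simp add: \<Delta>_def)
  have rpos: "0 < r" and loc: "\<And>j u v. (\<forall>k\<in>ball1 j r. u k = v k) \<Longrightarrow> S j u = S j v"
    using assms(1) unfolding condA_def by blast+
  have cB: "\<And>j k l u. S j (tau k l u) = S (j + k) u" using assms(2) unfolding condB_def by blast
  obtain c0 where c0: "\<And>u. c0 \<le> S 0 u" using assms(3) unfolding condC_def by blast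
  have Slow: "c0 \<le> S k u" for k u using c0[of "tau k 0 u"] cB[of 0 k 0 u] by simp
  define V where "V = (\<lambda>(j,A). S j (mix x z A)) ` (SIGMA j:Bp p. Pow (ball1 j r))"
  have finV: "finite V" unfolding V_def
    by (intro finite_imageI finite_SigmaI finite_Bp) (simp add: finite_ball1)
  define M where "M = Max (insert 0 V)"
  have Sup: "S k (mix x z A) \<le> M" for k A
  proof -
    obtain j n where j: "j \<in> Bp p" "k = j + lat p n" using decomp_exists[OF injp indp] by blast
    have "S k (mix x z A) = S j (tau (lat p n) (lq q n) (mix x z A))" using cB j(2) by simp
    also have "\<dots> = S j (mix x z {i. i + lat p n \<in> A})" by (simp add: tau_mix[OF xX zX])
    also have "\<dots> = S j (mix x z ({i. i + lat p n \<in> A} \<inter> ball1 j r))"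
      by (rule loc) (simp add: mix_def)
    also have "\<dots> \<in> V" unfolding V_def using j(1)
      by (intro image_eqI[of _ _ "(j, {i. i + lat p n \<in> A} \<inter> ball1 j r)"]) auto
    hence "S j (mix x z ({i. i + lat p n \<in> A} \<inter> ball1 j r)) \<le> M"
      unfolding M_def using finV by (intro Max_ge) auto
    finally show ?thesis .
  qed
  define K where "K = max 0 (M - c0)"
  have K0: "0 \<le> K" by (simp add: K_def)
  define R0 where "R0 = \<lceil>2 * r\<rceil> + 2 * Rb p"
  define Cs where "Cs = lat p -` ibox R0"
  have injlat: "inj (lat p)" by (rule injI) (rule lat_inj[OF injp indp])
  have finCs: "finite Cs" unfolding Cs_def by (rule finite_vimageI[OF finite_ibox injlat])
  define R' where "R' = Max (insert 0 ((\<lambda>(c,m). \<bar>c m\<bar>) ` (Cs \<times> UNIV)))"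
  have R'0: "0 \<le> R'" unfolding R'_def using finCs by (intro Max_ge) auto
  have Rb: "\<bar>c m\<bar> \<le> R'" if "c \<in> Cs" for c m
    unfolding R'_def using finCs that by (intro Max_ge) force+
  define Q0 where "Q0 = card (Bp p) * (CARD('d) * (2 * nat R'))"
  obtain n0 :: nat where n0: "K * real Q0 / \<Delta> < real n0" using reals_Archimedean2 by blast
  define N where "N = Suc n0"
  have NQ: "K * real Q0 < real N * \<Delta>"
    using n0 \<Delta>pos by (simp add: N_def pos_divide_less_eq algebra_simps)
  define \<phi> where "\<phi> = (\<lambda>(j,n). j + lat p n)"
  define B where "B = \<phi> ` (Bp p \<times> grid N)"
  define I where "I = interior_r r B"
  have finB: "finite B" unfolding B_def by (intro finite_imageI finite_SigmaI finite_Bp finite_grid)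
  define y where "y = (\<lambda>i. if i \<in> I then z i - x i else 0)"
  have ysupp: "{i. y i \<noteq> 0} \<subseteq> interior_r r B" by (auto simp: y_def I_def split: if_splits)
  have xy: "(\<lambda>i. x i + y i) = mix x z I" by (simp add: y_def mix_def fun_eq_iff)
  have gm: "WB S B x \<le> WB S B (mix x z I)"
    using assms(9) finB ysupp unfolding global_minimizer_def xy[symmetric] by blast
  have WBx: "WB S B x = real (N ^ CARD('d)) * Wpq S p x"
    unfolding B_def \<phi>_def by (rule sum_boxN[OF injp indp assms(2) xX])
  have WBz: "WB S B z = real (N ^ CARD('d)) * Wpq S p z"
    unfolding B_def \<phi>_def by (rule sum_boxN[OF injp indp assms(2) zX])
  define bad where "bad = {k \<in> B. \<not> ball1 k r \<subseteq> I}"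
  have "WB S B (mix x z I) - WB S B z = (\<Sum>k\<in>B. S k (mix x z I) - S k z)"
    by (simp add: WB_def sum_subtractf)
  also have "\<dots> \<le> (\<Sum>k\<in>B. if \<not> ball1 k r \<subseteq> I then K else 0)"
  proof (rule sum_mono)
    fix k assume "k \<in> B"
    show "S k (mix x z I) - S k z \<le> (if \<not> ball1 k r \<subseteq> I then K else 0)"
    proof (cases "ball1 k r \<subseteq> I")
      case True
      hence "S k (mix x z I) = S k z" by (intro loc) (auto simp: mix_def)
      thus ?thesis using True by simp
    next
      case False
      thus ?thesis using Sup[of k I] Slow[of k z] by (simp add: K_def)
    qed
  qed
  also have "\<dots> = (\<Sum>k\<in>bad. K)" unfolding bad_def by (rule sum.inter_filter[symmetric, OF finB])
  also have "\<dots> = K * real (card bad)" by simp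
  finally have main1: "WB S B (mix x z I) - WB S B z \<le> K * real (card bad)" .
  define E where "E = {n \<in> grid N. \<exists>m::'d. n m < R' \<or> int N - R' \<le> n m}"
  have badsub: "bad \<subseteq> \<phi> ` (Bp p \<times> E)"
  proof
    fix k assume "k \<in> bad"
    hence kB: "k \<in> B" and nsub: "\<not> ball1 k r \<subseteq> I" by (auto simp: bad_def)
    then obtain j n where j: "j \<in> Bp p" "n \<in> grid N" "k = j + lat p n"
      unfolding B_def \<phi>_def by auto
    obtain k1 where k1: "k1 \<in> ball1 k r" "k1 \<notin> I" using nsub by blast
    obtain k2 where k2: "k2 \<notin> B" "real_of_int (norm1 (k2 - k)) \<le> 2 * r"
    proof (cases "k1 \<in> B")
      case False
      thus ?thesis using k1(1) rpos by (intro that[of k1]) (auto simp: ball1_def)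
    next
      case True
      with k1(2) obtain k2 where "k2 \<in> ball1 k1 r" "k2 \<notin> B" by (auto simp: I_def interior_r_def)
      moreover have "norm1 (k2 - k) \<le> norm1 (k2 - k1) + norm1 (k1 - k)"
        using norm1_triangle[of "k2 - k1" "k1 - k"] by simp
      ultimately show ?thesis using k1(1) by (intro that[of k2]) (auto simp: ball1_def)
    qed
    obtain j2 n2 where j2: "j2 \<in> Bp p" "k2 = j2 + lat p n2" using decomp_exists[OF injp indp] by blast
    have n2G: "n2 \<notin> grid N"
    proof
      assume "n2 \<in> grid N"
      hence "k2 \<in> B" unfolding B_def \<phi>_def using j2 by auto
      thus False using k2(1) by simp
    qed
    have latd: "lat p (\<lambda>m. n2 m - n m) = (k2 - k) + j - j2"
      by (simp add: lat_diff j j2 algebra_simps)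
    have "(\<lambda>m. n2 m - n m) \<in> Cs" unfolding Cs_def
    proof (simp add: latd ibox_def, intro allI)
      fix m
      have a: "\<bar>(k2 - k) $ m\<bar> \<le> norm1 (k2 - k)" by (rule comp_le_norm1)
      have b: "norm1 (k2 - k) \<le> \<lceil>2 * r\<rceil>" using k2(2) by linarith
      have c: "\<bar>j $ m\<bar> \<le> Rb p" "\<bar>j2 $ m\<bar> \<le> Rb p" using Bp_ibox j(1) j2(1) by (auto simp: ibox_def)
      show "\<bar>k2 $ m - k $ m + j $ m - j2 $ m\<bar> \<le> R0"
        using a b c unfolding R0_def by simp
    qed
    hence close: "\<bar>n2 m - n m\<bar> \<le> R'" for m using Rb by blast
    obtain m where "\<not> (0 \<le> n2 m \<and> n2 m < int N)" using n2G by (auto simp: grid_def PiE_iff)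
    hence "n m < R' \<or> int N - R' \<le> n m" using close[of m] by linarith
    hence "n \<in> E" using j(2) by (auto simp: E_def)
    thus "k \<in> \<phi> ` (Bp p \<times> E)" using j by (auto simp: \<phi>_def)
  qed
  have finE: "finite E" unfolding E_def by (rule finite_subset[OF _ finite_grid]) auto
  have "card bad \<le> card (\<phi> ` (Bp p \<times> E))"
    by (rule card_mono[OF _ badsub]) (simp add: finE finite_Bp)
  also have "\<dots> \<le> card (Bp p \<times> E)" by (rule card_image_le) (simp add: finE finite_Bp)
  also have "\<dots> = card (Bp p) * card E" by (rule card_cartesian_product)
  also have "\<dots> \<le> card (Bp p) * (CARD('d) * (2 * nat R' * N ^ (CARD('d) - 1)))"
    unfolding E_def by (intro mult_le_mono2 card_edge R'0)
  also have "\<dots> = Q0 * N ^ (CARD('d) - 1)" by (simp add: Q0_def)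
  finally have cbad: "card bad \<le> Q0 * N ^ (CARD('d) - 1)" .
  define T where "T = real (N ^ (CARD('d) - 1))"
  have Tpos: "0 < T" by (simp add: T_def N_def)
  have NdT: "real (N ^ CARD('d)) = real N * T"
  proof -
    have "CARD('d) = Suc (CARD('d) - 1)" by simp
    hence "N ^ CARD('d) = N * N ^ (CARD('d) - 1)" by (metis power_Suc)
    thus ?thesis by (simp add: T_def)
  qed
  have "K * real (card bad) \<le> K * (real Q0 * T)"
  proof (rule mult_left_mono[OF _ K0])
    have "real (card bad) \<le> real (Q0 * N ^ (CARD('d) - 1))" using cbad by (rule of_nat_mono)
    thus "real (card bad) \<le> real Q0 * T" by (simp add: T_def)
  qed
  note kb = this
  have h1: "real (N ^ CARD('d)) * Wpq S p x \<le> real (N ^ CARD('d)) * Wpq S p z + K * (real Q0 * T)"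
    using main1 gm WBx WBz kb by linarith
  have e1: "real N * T * \<Delta> = real N * T * Wpq S p x - real N * T * Wpq S p z"
    by (simp add: \<Delta>_def algebra_simps)
  have "real N * T * \<Delta> \<le> K * real Q0 * T"
    using h1 unfolding NdT e1 by (simp add: mult.assoc)
  hence "real N * \<Delta> \<le> K * real Q0" using Tpos
    by (metis mult.commute mult.left_commute mult_le_cancel_left_pos)
  thus False using NQ by simp
qed


end
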